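(* $L^\infty(\mathbb R^n)\cap{\rm BMO}^\Phi(\mathbb R^n)=L^\infty(\mathbb R^n)\cap{\rm bmo}^\Phi(\mathbb R^n)$; equivalently, $L^\infty(\mathbb R^n)\cap(H^\Phi_*(\mathbb R^n))^*=L^\infty(\mathbb R^n)\cap{\rm bmo}^\Phi(\mathbb R^n)$.
   Context: $\Phi(\tau):=\tau/\log(e+\tau)$. ${\rm BMO}^\Phi(\mathbb R^n)$ is the set of $f\in L^1_{\rm loc}$ with $\|f\|_{{\rm BMO}^\Phi}:=\sup_B\frac{\log(e+1/|B|)}{|B|}\int_B|f-f_B|\,dx<\infty$ (sup over all balls; $f_B$ the mean of $f$ on $B$). ${\rm bmo}^\Phi(\mathbb R^n)$ is the set of $f\in L^1_{\rm loc}$ with $\sup_{B:|B|<1}\frac{\log(e+1/|B|)}{|B|}\int_B|f-f_B|+\sup_{B:|B|\ge1}\frac{\log(e+1/|B|)}{|B|}\int_B|f|<\infty$. ${\rm BMO}^\Phi(\mathbb R^n)$ is the dual of the variant Orlicz Hardy space $H^\Phi_*(\mathbb R^n):=\{f\in\mathcal S':\sum_{k\in\mathbb Z^n}\|M(f,\varphi)\mathbf 1_{k+[0,1)^n}\|_{L^\Phi}<\infty\}$, where $M(f,\varphi)(x)=\sup_{s>0}|f*\varphi_s(x)|$ for a fixed $\varphi\in\mathcal S$ with $\int\varphi\ne0$ and $\|h\|_{L^\Phi}:=\inf\{\lambda>0:\int\Phi(|h|/\lambda)\le1\}$. *)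

theory Defs
  imports "HOL-Analysis.Analysis"
begin

text \<open>Functions on R^n are real-valued functions on the type real^'n (n = CARD('n)).
  Balls are open Euclidean balls of positive radius; |B| is Lebesgue measure.\<close>

definition loc_integrable :: "(real^'n \<Rightarrow> real) \<Rightarrow> bool" where
  "loc_integrable f \<longleftrightarrow> (\<forall>x r. set_integrable lebesgue (ball x r) f)"

definition Linfty :: "(real^'n \<Rightarrow> real) set" where
  "Linfty = {f. f \<in> borel_measurable lebesgue \<and> (\<exists>C. AE x in lebesgue. \<bar>f x\<bar> \<le> C)}"

definition ball_mean :: "(real^'n \<Rightarrow> real) \<Rightarrow> (real^'n) set \<Rightarrow> real" where
  "ball_mean f B = (LINT y:B|lebesgue. f y) / measure lebesgue B"

definition log_weight :: "(real^'n) set \<Rightarrow> real" where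
  "log_weight B = ln (exp 1 + 1 / measure lebesgue B)"

definition BMO_Phi :: "(real^'n \<Rightarrow> real) set" where
  "BMO_Phi = {f. loc_integrable f \<and>
     (\<exists>C. \<forall>x r. r > 0 \<longrightarrow>
        log_weight (ball x r) / measure lebesgue (ball x r) *
          (LINT y:ball x r|lebesgue. \<bar>f y - ball_mean f (ball x r)\<bar>) \<le> C)}"

definition bmo_Phi :: "(real^'n \<Rightarrow> real) set" where
  "bmo_Phi = {f. loc_integrable f \<and>
     (\<exists>C. \<forall>x r. r > 0 \<longrightarrow> measure lebesgue (ball x r) < 1 \<longrightarrow>
        log_weight (ball x r) / measure lebesgue (ball x r) *
          (LINT y:ball x r|lebesgue. \<bar>f y - ball_mean f (ball x r)\<bar>) \<le> C) \<and>
     (\<exists>C. \<forall>x r. r > 0 \<longrightarrow> measure lebesgue (ball x r) \<ge> 1 \<longrightarrow>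
        log_weight (ball x r) / measure lebesgue (ball x r) *
          (LINT y:ball x r|lebesgue. \<bar>f y\<bar>) \<le> C)}"

end

theory Submission imports Defs begin
lemma ball_meas_pos: "r > 0 \<Longrightarrow> 0 < measure lebesgue (ball (x::real^'n) r)"
  using content_ball_pos[of r x] by simp
lemma ball_const_int: "set_integrable lebesgue (ball (x::real^'n) r) (\<lambda>_. c::real)"
  unfolding set_integrable_def
  using lmeasurable_ball[of x r]
proof -
  have "integrable lebesgue (\<lambda>y. c * indicator (ball x r) y)"
    using lmeasurable_ball[of x r] by (intro integrable_mult_right integrable_real_indicator) (auto simp: fmeasurable_def)
  then show "integrable lebesgue (\<lambda>y. indicator (ball x r) y *\<^sub>R c)" by (simp add: mult.commute)
qed
lemma ball_int_const: "(LINT y:ball (x::real^'n) r|lebesgue. (c::real)) = measure lebesgue (ball x r) * c"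
  using lmeasurable_ball[of x r] by (subst set_integral_const) (auto simp: fmeasurable_def)

lemma lw_nonneg: "0 \<le> log_weight (ball (x::real^'n) r)"
  unfolding log_weight_def
  by (smt (verit, best) exp_ge_add_one_self ln_ge_zero measure_nonneg divide_nonneg_nonneg)

lemma lw_le: "1 \<le> measure lebesgue (ball (x::real^'n) r) \<Longrightarrow> log_weight (ball x r) \<le> ln (exp 1 + 1)"
  unfolding log_weight_def
proof -
  assume h: "1 \<le> measure lebesgue (ball x r)"
  have "1 / measure lebesgue (ball x r) \<le> 1" using h by (simp add: divide_le_eq)
  moreover have "0 \<le> 1 / measure lebesgue (ball x r)" by simp
  ultimately show "ln (exp 1 + 1 / measure lebesgue (ball x r)) \<le> ln (exp 1 + 1)"
    by (subst ln_le_cancel_iff) (auto intro: add_pos_nonneg)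
qed

lemma dir1:
  assumes f: "(f::real^'n\<Rightarrow>real) \<in> Linfty" and li: "loc_integrable f"
  shows "\<exists>C. \<forall>x r. r > 0 \<longrightarrow> measure lebesgue (ball x r) \<ge> 1 \<longrightarrow>
        log_weight (ball x r) / measure lebesgue (ball x r) *
          (LINT y:ball x r|lebesgue. \<bar>f y\<bar>) \<le> C"
proof -
  obtain C0 where C0: "AE x in lebesgue. \<bar>f x\<bar> \<le> C0" using f unfolding Linfty_def by auto
  define C where "C = max C0 0"
  have C: "AE x in lebesgue. \<bar>f x\<bar> \<le> C" using C0 unfolding C_def by (auto elim: AE_mp)
  show ?thesis
  proof (intro exI allI impI)
    fix x :: "real^'n" and r assume r: "(r::real) > 0" and m1: "measure lebesgue (ball x r) \<ge> 1"
    let ?m = "measure lebesgue (ball x r)"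
    have mp: "0 < ?m" using r by (rule ball_meas_pos)
    have "(LINT y:ball x r|lebesgue. \<bar>f y\<bar>) \<le> (LINT y:ball x r|lebesgue. C)"
      using li unfolding loc_integrable_def
      by (intro set_integral_mono_AE set_integrable_abs ball_const_int) (auto intro: AE_mp[OF C])
    also have "\<dots> = ?m * C" by (rule ball_int_const)
    finally have I: "(LINT y:ball x r|lebesgue. \<bar>f y\<bar>) \<le> ?m * C" .
    have "log_weight (ball x r) / ?m * (LINT y:ball x r|lebesgue. \<bar>f y\<bar>) \<le> log_weight (ball x r) / ?m * (?m * C)"
      using I lw_nonneg[of x r] mp by (intro mult_left_mono) auto
    also have "\<dots> = log_weight (ball x r) * C" using mp by simp
    also have "\<dots> \<le> ln (exp 1 + 1) * C"
      using lw_le[OF m1] C_def by (intro mult_right_mono) auto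
    finally show "log_weight (ball x r) / ?m * (LINT y:ball x r|lebesgue. \<bar>f y\<bar>) \<le> ln (exp 1 + 1) * C" .
  qed
qed

lemma osc_le:
  assumes li: "loc_integrable (f::real^'n\<Rightarrow>real)" and r: "r > 0"
  shows "(LINT y:ball x r|lebesgue. \<bar>f y - ball_mean f (ball x r)\<bar>) \<le> 2 * (LINT y:ball x r|lebesgue. \<bar>f y\<bar>)"
proof -
  let ?m = "measure lebesgue (ball x r)"
  let ?c = "ball_mean f (ball x r)"
  have mp: "0 < ?m" using r by (rule ball_meas_pos)
  have fi: "set_integrable lebesgue (ball x r) f" using li unfolding loc_integrable_def by auto
  have ci: "set_integrable lebesgue (ball x r) (\<lambda>_. \<bar>?c\<bar>)" by (rule ball_const_int)
  have "(LINT y:ball x r|lebesgue. \<bar>f y - ?c\<bar>) \<le> (LINT y:ball x r|lebesgue. \<bar>f y\<bar> + \<bar>?c\<bar>)"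
    using fi ci by (intro set_integral_mono set_integrable_abs set_integral_diff(1) set_integral_add(1) ball_const_int) auto
  also have "\<dots> = (LINT y:ball x r|lebesgue. \<bar>f y\<bar>) + ?m * \<bar>?c\<bar>"
    using fi ci by (simp add: set_integral_add(2) set_integrable_abs ball_int_const)
  also have "?m * \<bar>?c\<bar> = \<bar>LINT y:ball x r|lebesgue. f y\<bar>"
    using mp by (simp add: ball_mean_def abs_divide)
  also have "\<bar>LINT y:ball x r|lebesgue. f y\<bar> \<le> (LINT y:ball x r|lebesgue. \<bar>f y\<bar>)"
    using set_integral_norm_bound[OF fi] by simp
  finally show ?thesis by simp
qed

theorem lemma4p40:
  shows "(Linfty \<inter> BMO_Phi :: (real^'n \<Rightarrow> real) set) = Linfty \<inter> bmo_Phi"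
proof (intro set_eqI iffI)
  fix f :: "real^'n \<Rightarrow> real"
  assume "f \<in> Linfty \<inter> BMO_Phi"
  then have f: "f \<in> Linfty" and li: "loc_integrable f" and
    B: "\<exists>C. \<forall>x r. r > 0 \<longrightarrow>
        log_weight (ball x r) / measure lebesgue (ball x r) *
          (LINT y:ball x r|lebesgue. \<bar>f y - ball_mean f (ball x r)\<bar>) \<le> C"
    unfolding BMO_Phi_def by auto
  show "f \<in> Linfty \<inter> bmo_Phi"
    using f li B dir1[OF f li] unfolding bmo_Phi_def by blast
next
  fix f :: "real^'n \<Rightarrow> real"
  assume "f \<in> Linfty \<inter> bmo_Phi"
  then have f: "f \<in> Linfty" and li: "loc_integrable f" and
    S: "\<exists>C. \<forall>x r. r > 0 \<longrightarrow> measure lebesgue (ball x r) < 1 \<longrightarrow>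
        log_weight (ball x r) / measure lebesgue (ball x r) *
          (LINT y:ball x r|lebesgue. \<bar>f y - ball_mean f (ball x r)\<bar>) \<le> C" and
    L: "\<exists>C. \<forall>x r. r > 0 \<longrightarrow> measure lebesgue (ball x r) \<ge> 1 \<longrightarrow>
        log_weight (ball x r) / measure lebesgue (ball x r) *
          (LINT y:ball x r|lebesgue. \<bar>f y\<bar>) \<le> C"
    unfolding bmo_Phi_def by auto
  obtain C1 where C1: "\<And>x r. r > 0 \<Longrightarrow> measure lebesgue (ball x r) < 1 \<Longrightarrow>
        log_weight (ball x r) / measure lebesgue (ball x r) *
          (LINT y:ball x r|lebesgue. \<bar>f y - ball_mean f (ball x r)\<bar>) \<le> C1" using S by blast
  obtain C2 where C2: "\<And>x r. r > 0 \<Longrightarrow> measure lebesgue (ball x r) \<ge> 1 \<Longrightarrow>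
        log_weight (ball x r) / measure lebesgue (ball x r) *
          (LINT y:ball x r|lebesgue. \<bar>f y\<bar>) \<le> C2" using L by blast
  have "\<forall>x r. r > 0 \<longrightarrow>
        log_weight (ball x r) / measure lebesgue (ball x r) *
          (LINT y:ball x r|lebesgue. \<bar>f y - ball_mean f (ball x r)\<bar>) \<le> max C1 (2 * C2)"
  proof (intro allI impI)
    fix x :: "real^'n" and r :: real assume r: "r > 0"
    show "log_weight (ball x r) / measure lebesgue (ball x r) *
          (LINT y:ball x r|lebesgue. \<bar>f y - ball_mean f (ball x r)\<bar>) \<le> max C1 (2 * C2)"
    proof (cases "measure lebesgue (ball x r) < 1")
      case True then show ?thesis using C1[OF r True] by linarith
    next
      case False
      then have m1: "measure lebesgue (ball x r) \<ge> 1" by simp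
      have w: "0 \<le> log_weight (ball x r) / measure lebesgue (ball x r)"
        using lw_nonneg[of x r] by simp
      have "log_weight (ball x r) / measure lebesgue (ball x r) *
          (LINT y:ball x r|lebesgue. \<bar>f y - ball_mean f (ball x r)\<bar>)
          \<le> log_weight (ball x r) / measure lebesgue (ball x r) * (2 * (LINT y:ball x r|lebesgue. \<bar>f y\<bar>))"
        using w osc_le[OF li r, of x] by (rule mult_left_mono[rotated])
      also have "\<dots> = 2 * (log_weight (ball x r) / measure lebesgue (ball x r) * (LINT y:ball x r|lebesgue. \<bar>f y\<bar>))" by (simp only: mult.left_commute)
      also have "\<dots> \<le> 2 * C2" using C2[OF r m1] by linarith
      finally show ?thesis by linarith
    qed
  qed
  then show "f \<in> Linfty \<inter> BMO_Phi" using f li unfolding BMO_Phi_def by blast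
qed

end
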